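(* Let $C\geq 1$ and $n\ge 2$. Let $x_1<\dots<x_n$, $y_1<\dots<y_n$, $p_1<\dots<p_n$ be real numbers, and write $\Delta x_i=x_{i+1}-x_i$, $\Delta y_i=y_{i+1}-y_i$, $\Delta p_i=p_{i+1}-p_i$ for $1\le i\le n-1$. Suppose that for all $1\le i\le n-1$, \[ C^{-1}\Delta x_i\le \Delta p_i\le C\Delta x_i \quad\text{and}\quad C^{-1}\Big(p_{i+1}-\tfrac{\Delta y_i}{\Delta x_i}\Big)\le \tfrac{\Delta y_i}{\Delta x_i}-p_i\le C\Big(p_{i+1}-\tfrac{\Delta y_i}{\Delta x_i}\Big). \] Then there is a constant $K\ge1$ depending only on $C$ such that: (a) There exists a strictly convex $C^1$ function $f$ on $[x_1,x_n]$ with $f(x_i)=y_i$ and $f'(x_i)=p_i$ for all $i$, such that $f'$ is piecewise linear and each linear piece of $f'$ has slope in $[K^{-1},K]$. (b) Letting $D$ be $\frac{\pi}{4}$ times the infimum of the slopes of the linear pieces of $f'$ for the function $f$ in (a), the function $f$ can be modified to a convex $C^2$ function $g$ on $[x_1,x_n]$ with $g(x_i)=y_i$, $g'(x_i)=p_i$ and $g''(x_i)=D$ for all $i$, and $K^{-1}\le g''(x)\le K$ for all $x\in(x_1,x_n)$. *)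

theory Defs
  imports "HOL-Analysis.Analysis"
begin

definition strict_convex_on :: "real set \<Rightarrow> (real \<Rightarrow> real) \<Rightarrow> bool" where
  "strict_convex_on S f \<longleftrightarrow> convex S \<and>
     (\<forall>x\<in>S. \<forall>y\<in>S. x \<noteq> y \<longrightarrow> (\<forall>u. 0 < u \<and> u < 1 \<longrightarrow>
        f (u * x + (1 - u) * y) < u * f x + (1 - u) * f y))"

end

theory Submission
  imports Defs
begin


lemma deriv_glue2:
  fixes f g f' g' :: "real \<Rightarrow> real"
  assumes ab: "a \<le> b" and bc: "b \<le> c"
    and df: "\<forall>t\<in>{a..b}. (f has_real_derivative f' t) (at t within {a..b})"
    and dg: "\<forall>t\<in>{b..c}. (g has_real_derivative g' t) (at t within {b..c})"
    and e1: "f b = g b" and e2: "f' b = g' b" and t: "t \<in> {a..c}"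
  shows "((\<lambda>t. if t \<le> b then f t else g t) has_real_derivative (if t \<le> b then f' t else g' t)) (at t within {a..c})"
proof -
  have cl: "closure {a..b} \<inter> closure {b..c} = {b}" using ab bc by auto
  have U1: "{a..b} \<union> (closure {a..b} \<inter> closure {b..c}) = {a..b}" using cl ab by auto
  have U2: "{b..c} \<union> (closure {a..b} \<inter> closure {b..c}) = {b..c}" using cl bc by auto
  have U: "{a..b} \<union> {b..c} = {a..c}" using ab bc by auto
  have "((\<lambda>x. if x \<in> {a..b} then f x else g x) has_derivative
      (if t \<in> {a..b} then (\<lambda>h. f' t * h) else (\<lambda>h. g' t * h))) (at t within ({a..b} \<union> {b..c}))"
  proof (rule has_derivative_If_within_closures)
    show "t \<in> {a..b} \<union> (closure {a..b} \<inter> closure {b..c}) \<Longrightarrow>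
      (f has_derivative (\<lambda>h. f' t * h)) (at t within {a..b} \<union> (closure {a..b} \<inter> closure {b..c}))"
      using df unfolding U1 has_field_derivative_def by auto
    show "t \<in> {b..c} \<union> (closure {a..b} \<inter> closure {b..c}) \<Longrightarrow>
      (g has_derivative (\<lambda>h. g' t * h)) (at t within {b..c} \<union> (closure {a..b} \<inter> closure {b..c}))"
      using dg unfolding U2 has_field_derivative_def by auto
    show "t \<in> closure {a..b} \<Longrightarrow> t \<in> closure {b..c} \<Longrightarrow> f t = g t" using cl e1 by auto
    show "t \<in> closure {a..b} \<Longrightarrow> t \<in> closure {b..c} \<Longrightarrow> (\<lambda>h. f' t * h) = (\<lambda>h. g' t * h)" using cl e2 by auto
    show "t \<in> {a..b} \<union> {b..c}" using t U by auto
  qed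
  then have 1: "((\<lambda>x. if x \<in> {a..b} then f x else g x) has_derivative
      (*) (if t \<le> b then f' t else g' t)) (at t within {a..c})"
    unfolding U using t by (cases "t \<le> b") auto
  have 2: "((\<lambda>x. if x \<le> b then f x else g x) has_derivative
      (*) (if t \<le> b then f' t else g' t)) (at t within {a..c})"
    by (rule has_derivative_transform_within[OF 1 zero_less_one]) (use t in auto)
  then show ?thesis unfolding has_field_derivative_def .
qed

fun gl :: "(nat \<Rightarrow> real \<Rightarrow> real) \<Rightarrow> (nat \<Rightarrow> real) \<Rightarrow> nat \<Rightarrow> real \<Rightarrow> real" where
  "gl \<phi> a 0 t = \<phi> 0 t"
| "gl \<phi> a (Suc m) t = (if t \<le> a (Suc m) then gl \<phi> a m t else \<phi> (Suc m) t)"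

lemma a_mono:
  assumes "\<forall>j\<le>m. a j < a (Suc j)" "i \<le> k" "k \<le> Suc m"
  shows "a i \<le> (a k :: real)"
  using assms(2,3)
proof (induction k)
  case 0 then show ?case by simp
next
  case (Suc k)
  show ?case
  proof (cases "i = Suc k")
    case False
    then have "a i \<le> a k" using Suc by simp
    also have "a k < a (Suc k)" using assms(1) Suc by simp
    finally show ?thesis by simp
  qed simp
qed

lemma gl_end:
  assumes "\<forall>j\<le>m. a j < a (Suc j)"
  shows "gl \<phi> a m (a (Suc m)) = \<phi> m (a (Suc m))"
proof (cases m)
  case (Suc k)
  then have "\<not> a (Suc m) \<le> a m" using assms by (meson leD order_refl)
  then show ?thesis using Suc by simp
qed simp

lemma gl_val:
  assumes inc: "\<forall>j\<le>m. a j < a (Suc j)"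
    and match: "\<forall>j<m. \<phi> j (a (Suc j)) = \<phi> (Suc j) (a (Suc j))"
    and j: "j \<le> m" and t: "t \<in> {a j..a (Suc j)}"
  shows "gl \<phi> a m t = \<phi> j t"
  using inc match j t
proof (induction m arbitrary: j)
  case 0 then show ?case by simp
next
  case (Suc m)
  show ?case
  proof (cases "j \<le> m")
    case True
    have "a (Suc j) \<le> a (Suc m)" using a_mono[OF Suc.prems(1), of "Suc j" "Suc m"] True by simp
    then have "t \<le> a (Suc m)" using Suc.prems(4) by simp
    then show ?thesis using Suc.IH[of j] Suc.prems True by simp
  next
    case False
    then have jj: "j = Suc m" using Suc.prems(3) by simp
    show ?thesis
    proof (cases "t \<le> a (Suc m)")
      case True
      then have tt: "t = a (Suc m)" using Suc.prems(4) jj by simp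
      have "gl \<phi> a m t = \<phi> m t" using gl_end[of m a \<phi>] Suc.prems tt by simp
      then show ?thesis using Suc.prems(2) tt jj True by simp
    qed (use jj in simp)
  qed
qed

lemma gl_deriv:
  assumes inc: "\<forall>j\<le>m. a j < a (Suc j)"
    and match: "\<forall>j<m. \<phi> j (a (Suc j)) = \<phi> (Suc j) (a (Suc j))"
    and match': "\<forall>j<m. \<psi> j (a (Suc j)) = \<psi> (Suc j) (a (Suc j))"
    and d: "\<forall>j\<le>m. \<forall>t\<in>{a j..a (Suc j)}. (\<phi> j has_real_derivative \<psi> j t) (at t within {a j..a (Suc j)})"
  shows "\<forall>t\<in>{a 0..a (Suc m)}. (gl \<phi> a m has_real_derivative gl \<psi> a m t) (at t within {a 0..a (Suc m)})"
  using inc match match' d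
proof (induction m)
  case 0 then show ?case by simp
next
  case (Suc m)
  have IH: "\<forall>t\<in>{a 0..a (Suc m)}. (gl \<phi> a m has_real_derivative gl \<psi> a m t) (at t within {a 0..a (Suc m)})"
    using Suc by simp
  have e: "gl \<phi> a (Suc m) = (\<lambda>t. if t \<le> a (Suc m) then gl \<phi> a m t else \<phi> (Suc m) t)" by (rule ext) simp
  have le1: "a 0 \<le> a (Suc m)" using a_mono[OF Suc.prems(1), of 0 "Suc m"] by simp
  have le2: "a (Suc m) \<le> a (Suc (Suc m))" using Suc.prems(1) by (meson less_imp_le order_refl)
  have v1: "gl \<phi> a m (a (Suc m)) = \<phi> (Suc m) (a (Suc m))"
    using gl_end[of m a \<phi>] Suc.prems by auto
  have v2: "gl \<psi> a m (a (Suc m)) = \<psi> (Suc m) (a (Suc m))"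
    using gl_end[of m a \<psi>] Suc.prems by auto
  show ?case
  proof
    fix t assume t: "t \<in> {a 0..a (Suc (Suc m))}"
    have "((\<lambda>t. if t \<le> a (Suc m) then gl \<phi> a m t else \<phi> (Suc m) t) has_real_derivative
        (if t \<le> a (Suc m) then gl \<psi> a m t else \<psi> (Suc m) t)) (at t within {a 0..a (Suc (Suc m))})"
      by (rule deriv_glue2[where g="\<phi> (Suc m)" and g'="\<psi> (Suc m)", OF le1 le2 IH _ v1 v2 t]) (use Suc.prems(4) in auto)
    then show "(gl \<phi> a (Suc m) has_real_derivative gl \<psi> a (Suc m) t) (at t within {a 0..a (Suc (Suc m))})"
      unfolding e by simp
  qed
qed

lemma gl_cont:
  assumes inc: "\<forall>j\<le>m. a j < a (Suc j)"
    and match: "\<forall>j<m. \<phi> j (a (Suc j)) = \<phi> (Suc j) (a (Suc j))"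
    and c: "\<forall>j\<le>m. continuous_on {a j..a (Suc j)} (\<phi> j)"
  shows "continuous_on {a 0..a (Suc m)} (gl \<phi> a m)"
  using inc match c
proof (induction m)
  case 0 then show ?case by simp
next
  case (Suc m)
  have IH: "continuous_on {a 0..a (Suc m)} (gl \<phi> a m)" using Suc by simp
  have e: "gl \<phi> a (Suc m) = (\<lambda>t. if t \<le> a (Suc m) then gl \<phi> a m t else \<phi> (Suc m) t)" by (rule ext) simp
  have le1: "a 0 \<le> a (Suc m)" using a_mono[OF Suc.prems(1), of 0 "Suc m"] by simp
  have le2: "a (Suc m) \<le> a (Suc (Suc m))" using Suc.prems(1) by (meson less_imp_le order_refl)
  have v1: "gl \<phi> a m (a (Suc m)) = \<phi> (Suc m) (a (Suc m))"
    using gl_end[of m a \<phi>] Suc.prems by auto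
  have U: "{a 0..a (Suc (Suc m))} = {a 0..a (Suc m)} \<union> {a (Suc m)..a (Suc (Suc m))}" using le1 le2 by auto
  show ?case unfolding e U
    by (rule continuous_on_cases) (use IH Suc.prems(3) v1 in auto)
qed

lemma gl_smono:
  assumes inc: "\<forall>j\<le>m. a j < a (Suc j)"
    and match: "\<forall>j<m. \<phi> j (a (Suc j)) = \<phi> (Suc j) (a (Suc j))"
    and c: "\<forall>j\<le>m. strict_mono_on {a j..a (Suc j)} (\<phi> j)"
  shows "strict_mono_on {a 0..a (Suc m)} (gl \<phi> a m)"
  using inc match c
proof (induction m)
  case 0 then show ?case by simp
next
  case (Suc m)
  have IH: "strict_mono_on {a 0..a (Suc m)} (gl \<phi> a m)" using Suc by simp
  have le1: "a 0 \<le> a (Suc m)" using a_mono[OF Suc.prems(1), of 0 "Suc m"] by simp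
  have v1: "gl \<phi> a m (a (Suc m)) = \<phi> (Suc m) (a (Suc m))"
    using gl_end[of m a \<phi>] Suc.prems by auto
  have sm: "strict_mono_on {a (Suc m)..a (Suc (Suc m))} (\<phi> (Suc m))" using Suc.prems(3) by simp
  show ?case
  proof (rule strict_mono_onI)
    fix r s assume r: "r \<in> {a 0..a (Suc (Suc m))}" and s: "s \<in> {a 0..a (Suc (Suc m))}" and rs: "r < s"
    consider "s \<le> a (Suc m)" | "r \<le> a (Suc m)" "\<not> s \<le> a (Suc m)" | "\<not> r \<le> a (Suc m)" by linarith
    then show "gl \<phi> a (Suc m) r < gl \<phi> a (Suc m) s"
    proof cases
      case 1 then show ?thesis using IH r s rs by (auto simp: strict_mono_on_def)
    next
      case 2
      have "gl \<phi> a m r \<le> gl \<phi> a m (a (Suc m))"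
        using IH r 2 le1 by (cases "r = a (Suc m)") (auto simp: strict_mono_on_def intro: less_imp_le)
      also have "\<dots> = \<phi> (Suc m) (a (Suc m))" by (rule v1)
      also have "\<dots> < \<phi> (Suc m) s" using sm s 2 le1 by (auto simp: strict_mono_on_def)
      finally show ?thesis using 2 by simp
    next
      case 3 then show ?thesis using sm r s rs by (auto simp: strict_mono_on_def)
    qed
  qed
qed

lemma gl_cover:
  fixes a :: "nat \<Rightarrow> real"
  assumes inc: "\<forall>j\<le>m. a j < a (Suc j)" and t: "t \<in> {a 0..a (Suc m)}"
  shows "\<exists>j\<le>m. t \<in> {a j..a (Suc j)}"
  using inc t
proof (induction m)
  case 0 then show ?case by simp
next
  case (Suc m)
  show ?case
  proof (cases "t \<le> a (Suc m)")
    case True then show ?thesis using Suc by (metis atLeastAtMost_iff le_Suc_eq)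
  next
    case False then show ?thesis using Suc.prems by (intro exI[of _ "Suc m"]) (simp add: not_le less_imp_le)
  qed
qed



lemma mvt_within:
  fixes f fd :: "real \<Rightarrow> real"
  assumes d: "\<forall>t\<in>{a..b}. (f has_real_derivative fd t) (at t within {a..b})"
    and xy: "x < y" "x \<in> {a..b}" "y \<in> {a..b}"
  shows "\<exists>\<xi>\<in>{x<..<y}. f y - f x = fd \<xi> * (y - x)"
proof -
  have "\<exists>\<xi>\<in>{x<..<y}. f y - f x = (\<lambda>t. (*) (fd t)) \<xi> (y - x)"
  proof (rule mvt_simple[OF xy(1)])
    fix t assume "x \<le> t" "t \<le> y"
    then have "t \<in> {a..b}" "{x..y} \<subseteq> {a..b}" using xy by auto
    then show "(f has_derivative (*) (fd t)) (at t within {x..y})"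
      using d has_derivative_subset unfolding has_field_derivative_def by blast
  qed
  then show ?thesis by simp
qed

lemma strict_convex_core:
  fixes f fd :: "real \<Rightarrow> real"
  assumes d: "\<forall>t\<in>{a..b}. (f has_real_derivative fd t) (at t within {a..b})"
    and sm: "strict_mono_on {a..b} fd"
    and xy: "x < y" "x \<in> {a..b}" "y \<in> {a..b}" and u: "0 < u" "u < 1"
  shows "f (u * x + (1 - u) * y) < u * f x + (1 - u) * f y"
proof -
  define z where "z = u * x + (1 - u) * y"
  have zx: "z - x = (1 - u) * (y - x)" and yz: "y - z = u * (y - x)" unfolding z_def by algebra+
  have xz: "x < z" using zx u xy by (smt (verit) mult_pos_pos)
  have zy: "z < y" using yz u xy by (smt (verit) mult_pos_pos)
  have z: "z \<in> {a..b}" using xz zy xy by auto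
  obtain \<xi>1 where x1: "\<xi>1 \<in> {x<..<z}" "f z - f x = fd \<xi>1 * (z - x)"
    using mvt_within[OF d xz xy(2) z] by blast
  obtain \<xi>2 where x2: "\<xi>2 \<in> {z<..<y}" "f y - f z = fd \<xi>2 * (y - z)"
    using mvt_within[OF d zy z xy(3)] by blast
  have "fd \<xi>1 < fd \<xi>2" using sm x1(1) x2(1) xy z unfolding strict_mono_on_def by auto
  have e1: "f z - f x = fd \<xi>1 * ((1 - u) * (y - x))" using x1(2) zx by simp
  have e2: "f y - f z = fd \<xi>2 * (u * (y - x))" using x2(2) yz by simp
  have "u * f x + (1 - u) * f y - f z = - u * (f z - f x) + (1 - u) * (f y - f z)" by algebra
  also have "\<dots> = u * (1 - u) * (y - x) * (fd \<xi>2 - fd \<xi>1)"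
    unfolding e1 e2 by algebra
  also have "\<dots> > 0" using u xy \<open>fd \<xi>1 < fd \<xi>2\<close> by simp
  finally show ?thesis unfolding z_def by simp
qed

lemma strict_convex_from_deriv:
  fixes f fd :: "real \<Rightarrow> real"
  assumes d: "\<forall>t\<in>{a..b}. (f has_real_derivative fd t) (at t within {a..b})"
    and sm: "strict_mono_on {a..b} fd"
  shows "strict_convex_on {a..b} f"
  unfolding strict_convex_on_def
proof (intro conjI ballI allI impI)
  show "convex {a..b}" by simp
  fix x y u :: real assume x: "x \<in> {a..b}" and y: "y \<in> {a..b}" and ne: "x \<noteq> y" and u: "0 < u \<and> u < 1"
  show "f (u * x + (1 - u) * y) < u * f x + (1 - u) * f y"
  proof (cases "x < y")
    case True then show ?thesis using strict_convex_core[OF d sm True x y] u by simp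
  next
    case False
    then have "y < x" using ne by simp
    then have "f ((1 - u) * y + (1 - (1 - u)) * x) < (1 - u) * f y + (1 - (1 - u)) * f x"
      using strict_convex_core[OF d sm _ y x, of "1 - u"] u by simp
    then show ?thesis by (simp add: algebra_simps)
  qed
qed

lemma strict_convex_imp_convex:
  assumes "strict_convex_on S f" shows "convex_on S f"
  unfolding convex_on_def
proof (intro conjI ballI allI impI)
  show "convex S" using assms unfolding strict_convex_on_def by simp
  fix x y u v :: real assume x: "x \<in> S" and y: "y \<in> S" and u: "u \<ge> 0" and v: "v \<ge> 0" and uv: "u + v = 1"
  show "f (u *\<^sub>R x + v *\<^sub>R y) \<le> u * f x + v * f y"
  proof (cases "x = y \<or> u = 0 \<or> v = 0")
    case True then show ?thesis using uv
      by (auto simp: algebra_simps) (metis add.commute add_0 distrib_right mult_1 order.refl)+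
  next
    case False
    then have "f (u * x + (1 - u) * y) < u * f x + (1 - u) * f y"
      using assms x y u v uv unfolding strict_convex_on_def by auto
    moreover have vv: "v = 1 - u" using uv by simp
    moreover have "u *\<^sub>R x + v *\<^sub>R y = u * x + (1 - u) * y" using vv by simp
    ultimately show ?thesis by simp
  qed
qed

lemma strict_mono_from_deriv:
  fixes f fd :: "real \<Rightarrow> real"
  assumes d: "\<forall>t\<in>{a..b}. (f has_real_derivative fd t) (at t within {a..b})"
    and pos: "\<forall>t\<in>{a..b}. fd t > 0"
  shows "strict_mono_on {a..b} f"
proof (rule strict_mono_onI)
  fix r s assume r: "r \<in> {a..b}" and s: "s \<in> {a..b}" and rs: "r < s"
  obtain \<xi> where "\<xi> \<in> {r<..<s}" "f s - f r = fd \<xi> * (s - r)" using mvt_within[OF d rs r s] by blast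
  moreover have "fd \<xi> > 0" using pos r s \<open>\<xi> \<in> {r<..<s}\<close> by auto
  ultimately show "f r < f s" using rs by (smt (verit) mult_pos_pos)
qed



definition pF :: "real \<Rightarrow> real \<Rightarrow> real \<Rightarrow> real \<Rightarrow> real \<Rightarrow> real" where
  "pF a0 Y P s t = Y + P * (t - a0) + s / 2 * (t - a0)^2"
definition pF' :: "real \<Rightarrow> real \<Rightarrow> real \<Rightarrow> real \<Rightarrow> real" where
  "pF' a0 P s t = P + s * (t - a0)"
definition pG :: "real \<Rightarrow> real \<Rightarrow> real \<Rightarrow> real \<Rightarrow> real \<Rightarrow> real \<Rightarrow> real \<Rightarrow> real" where
  "pG a0 a1 Y P s D t = pF a0 Y P s t + (s - D) / (2*pi/(a1-a0))^2 * (cos (2*pi/(a1-a0) * (t - a0)) - 1)"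
definition pG' :: "real \<Rightarrow> real \<Rightarrow> real \<Rightarrow> real \<Rightarrow> real \<Rightarrow> real \<Rightarrow> real" where
  "pG' a0 a1 P s D t = pF' a0 P s t - (s - D) / (2*pi/(a1-a0)) * sin (2*pi/(a1-a0) * (t - a0))"
definition pG'' :: "real \<Rightarrow> real \<Rightarrow> real \<Rightarrow> real \<Rightarrow> real \<Rightarrow> real" where
  "pG'' a0 a1 s D t = s - (s - D) * cos (2*pi/(a1-a0) * (t - a0))"

lemma pF_deriv: "(pF a0 Y P s has_real_derivative pF' a0 P s t) (at t within S)"
  unfolding pF_def pF'_def
  by (auto intro!: derivative_eq_intros simp: algebra_simps power2_eq_square)

lemma pG_deriv_w:
  fixes w :: real assumes w: "w \<noteq> 0"
  shows "((\<lambda>t. Y + P * (t - a0) + s / 2 * (t - a0)^2 + (s - D) / w^2 * (cos (w * (t - a0)) - 1))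
     has_real_derivative (P + s * (t - a0) - (s - D) / w * sin (w * (t - a0)))) (at t within S)"
  using w by (auto intro!: derivative_eq_intros simp: power2_eq_square field_simps)

lemma pG'_deriv_w:
  fixes w :: real assumes w: "w \<noteq> 0"
  shows "((\<lambda>t. P + s * (t - a0) - (s - D) / w * sin (w * (t - a0)))
     has_real_derivative (s - (s - D) * cos (w * (t - a0)))) (at t within S)"
  using w by (auto intro!: derivative_eq_intros simp: field_simps)

lemma pG_deriv:
  assumes "a0 < a1"
  shows "(pG a0 a1 Y P s D has_real_derivative pG' a0 a1 P s D t) (at t within S)"
proof -
  have w: "2*pi/(a1-a0) \<noteq> 0" using assms by simp
  show ?thesis
    unfolding pG_def pG'_def pF_def pF'_def by (rule pG_deriv_w[OF w])
qed

lemma pG'_deriv: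
  assumes "a0 < a1"
  shows "(pG' a0 a1 P s D has_real_derivative pG'' a0 a1 s D t) (at t within S)"
proof -
  have w: "2*pi/(a1-a0) \<noteq> 0" using assms by simp
  show ?thesis
    unfolding pG'_def pG''_def pF'_def by (rule pG'_deriv_w[OF w])
qed

lemma pG''_cont: "continuous_on S (pG'' a0 a1 s D)"
  unfolding pG''_def by (intro continuous_intros)

lemma pF'_cont: "continuous_on S (pF' a0 P s)"
  unfolding pF'_def by (intro continuous_intros)

lemma pF'_smono: "s > 0 \<Longrightarrow> strict_mono_on S (pF' a0 P s)"
  unfolding pF'_def by (rule strict_mono_onI) simp

lemma pG_ends:
  assumes "a0 < a1"
  shows "pG a0 a1 Y P s D a0 = Y" "pG' a0 a1 P s D a0 = P" "pG'' a0 a1 s D a0 = D"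
    "pG a0 a1 Y P s D a1 = pF a0 Y P s a1" "pG' a0 a1 P s D a1 = pF' a0 P s a1" "pG'' a0 a1 s D a1 = D"
    "pF a0 Y P s a0 = Y" "pF' a0 P s a0 = P"
proof -
  have e: "2*pi/(a1-a0) * (a1 - a0) = 2*pi" using assms by simp
  show "pG a0 a1 Y P s D a0 = Y" "pG' a0 a1 P s D a0 = P" "pG'' a0 a1 s D a0 = D"
    "pF a0 Y P s a0 = Y" "pF' a0 P s a0 = P"
    by (simp_all add: pG_def pG'_def pG''_def pF_def pF'_def)
  show "pG a0 a1 Y P s D a1 = pF a0 Y P s a1" "pG' a0 a1 P s D a1 = pF' a0 P s a1" "pG'' a0 a1 s D a1 = D"
    by (simp_all add: pG_def pG'_def pG''_def e)
qed

lemma pG''_bounds: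
  assumes "D \<le> s" "0 \<le> D"
  shows "D \<le> pG'' a0 a1 s D t" "pG'' a0 a1 s D t \<le> 2 * s"
proof -
  have c: "-1 \<le> cos (2*pi/(a1-a0) * (t - a0))" "cos (2*pi/(a1-a0) * (t - a0)) \<le> 1" by simp_all
  have "(s - D) * cos (2*pi/(a1-a0) * (t - a0)) \<le> (s - D) * 1"
    using c assms by (intro mult_left_mono) auto
  then show "D \<le> pG'' a0 a1 s D t" unfolding pG''_def by simp
  have "(s - D) * (-1) \<le> (s - D) * cos (2*pi/(a1-a0) * (t - a0))"
    using c assms by (intro mult_left_mono) auto
  then show "pG'' a0 a1 s D t \<le> 2 * s" unfolding pG''_def using assms by simp
qed



lemma interval_alg:
  fixes h al be Y0 P0 :: real assumes h: "h > 0" and al: "al > 0" and be: "be > 0"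
  shows "h*be/(al+be) > 0" "h*al/(al+be) > 0" "h*be/(al+be) + h*al/(al+be) = h"
    "al*(al+be)/(h*be) * (h*be/(al+be)) = al" "be*(al+be)/(h*al) * (h*al/(al+be)) = be"
    "Y0 + P0 * (h*be/(al+be)) + al*(al+be)/(h*be) / 2 * (h*be/(al+be))^2
      + (P0 + al) * (h*al/(al+be)) + be*(al+be)/(h*al) / 2 * (h*al/(al+be))^2 = Y0 + h * (P0 + al)"
proof -
  have S: "al + be > 0" using al be by simp
  show 1: "h*be/(al+be) > 0" "h*al/(al+be) > 0" using h al be S by simp_all
  define iS where "iS = 1 / (al + be)"
  have iS: "(al + be) * iS = 1" using S unfolding iS_def by simp
  have dL1: "h*be/(al+be) = h*be*iS" and dL2: "h*al/(al+be) = h*al*iS" unfolding iS_def by simp_all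
  show 2: "h*be/(al+be) + h*al/(al+be) = h" unfolding dL1 dL2
  proof -
    have "h*be*iS + h*al*iS = h * ((al + be) * iS)" by algebra
    then show "h*be*iS + h*al*iS = h" using iS by simp
  qed
  have nz: "al + be \<noteq> 0" "h * be \<noteq> 0" "h * al \<noteq> 0" using al be h by auto
  show 3: "al*(al+be)/(h*be) * (h*be/(al+be)) = al" "be*(al+be)/(h*al) * (h*al/(al+be)) = be"
    using nz by simp_all
  define L1 where "L1 = h*be/(al+be)"
  define L2 where "L2 = h*al/(al+be)"
  have g: "A / 2 * L^2 = (A * L) / 2 * L" for A L :: real by (simp add: power2_eq_square)
  have k1: "al*(al+be)/(h*be) / 2 * L1^2 = al / 2 * L1" unfolding g L1_def 3(1) ..
  have k2: "be*(al+be)/(h*al) / 2 * L2^2 = be / 2 * L2" unfolding g L2_def 3(2) ..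
  have k3: "al / 2 * L1 + al * L2 + be / 2 * L2 = h * al"
  proof -
    have "al / 2 * L1 + al * L2 + be / 2 * L2 = h * al * ((al + be) * iS)"
      unfolding L1_def L2_def dL1 dL2 by (simp add: field_simps)
    then show ?thesis using iS by simp
  qed
  have "Y0 + P0 * L1 + al*(al+be)/(h*be) / 2 * L1^2 + (P0 + al) * L2 + be*(al+be)/(h*al) / 2 * L2^2
     = Y0 + P0 * (L1 + L2) + (al / 2 * L1 + al * L2 + be / 2 * L2)"
    unfolding k1 k2 by (simp add: algebra_simps)
  also have "\<dots> = Y0 + h * (P0 + al)" using 2 k3 unfolding L1_def L2_def by (simp add: algebra_simps)
  finally show "Y0 + P0 * (h*be/(al+be)) + al*(al+be)/(h*be) / 2 * (h*be/(al+be))^2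
      + (P0 + al) * (h*al/(al+be)) + be*(al+be)/(h*al) / 2 * (h*al/(al+be))^2 = Y0 + h * (P0 + al)"
    unfolding L1_def L2_def .
qed

lemma prod_bounds:
  fixes C u v :: real assumes C: "C \<ge> 1" and "1/C \<le> u" "u \<le> C" "1/C \<le> v" "v \<le> C"
  shows "1/C^2 \<le> u * v" "u * v \<le> C^2"
proof -
  have "0 < 1/C" using C by simp
  have "1/C^2 = (1/C) * (1/C)" by (simp add: power2_eq_square)
  also have "\<dots> \<le> u * v" by (intro mult_mono) (use assms \<open>0 < 1/C\<close> in linarith)+
  finally show "1/C^2 \<le> u * v" .
  have "u * v \<le> C * C" by (intro mult_mono) (use assms \<open>0 < 1/C\<close> in linarith)+
  then show "u * v \<le> C^2" by (simp add: power2_eq_square)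
qed

lemma slope_bounds:
  fixes C h al be :: real assumes C: "C \<ge> 1" and h: "h > 0" and al: "al > 0" and be: "be > 0"
    and b1: "be / C \<le> al" "al \<le> C * be" and b2: "h / C \<le> al + be" "al + be \<le> C * h"
  shows "1/C^2 \<le> al*(al+be)/(h*be)" "al*(al+be)/(h*be) \<le> C^2"
    "1/C^2 \<le> be*(al+be)/(h*al)" "be*(al+be)/(h*al) \<le> C^2"
proof -
  have C0: "C > 0" using C by simp
  have r1: "1/C \<le> al/be" "al/be \<le> C" using b1 be C0 by (simp_all add: field_simps)
  have r2: "1/C \<le> be/al" "be/al \<le> C" using b1 al C0 by (simp_all add: field_simps)
  have r3: "1/C \<le> (al+be)/h" "(al+be)/h \<le> C" using b2 h C0 by (simp_all add: field_simps)
  have e1: "al*(al+be)/(h*be) = (al/be) * ((al+be)/h)" by simp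
  have e2: "be*(al+be)/(h*al) = (be/al) * ((al+be)/h)" by simp
  show "1/C^2 \<le> al*(al+be)/(h*be)" "al*(al+be)/(h*be) \<le> C^2"
    unfolding e1 using prod_bounds[OF C r1 r3] by auto
  show "1/C^2 \<le> be*(al+be)/(h*al)" "be*(al+be)/(h*al) \<le> C^2"
    unfolding e2 using prod_bounds[OF C r2 r3] by auto
qed



definition hh :: "(nat \<Rightarrow> real) \<Rightarrow> nat \<Rightarrow> real" where "hh x i = x (Suc i) - x i"
definition qq :: "(nat \<Rightarrow> real) \<Rightarrow> (nat \<Rightarrow> real) \<Rightarrow> nat \<Rightarrow> real" where "qq x y i = (y (Suc i) - y i) / hh x i"
definition al :: "(nat \<Rightarrow> real) \<Rightarrow> (nat \<Rightarrow> real) \<Rightarrow> (nat \<Rightarrow> real) \<Rightarrow> nat \<Rightarrow> real" where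
  "al x y p i = qq x y i - p i"
definition be :: "(nat \<Rightarrow> real) \<Rightarrow> (nat \<Rightarrow> real) \<Rightarrow> (nat \<Rightarrow> real) \<Rightarrow> nat \<Rightarrow> real" where
  "be x y p i = p (Suc i) - qq x y i"
definition LL1 where "LL1 x y p i = hh x i * be x y p i / (al x y p i + be x y p i)"
definition ss1 where "ss1 x y p i = al x y p i * (al x y p i + be x y p i) / (hh x i * be x y p i)"
definition ss2 where "ss2 x y p i = be x y p i * (al x y p i + be x y p i) / (hh x i * al x y p i)"
definition kn :: "(nat \<Rightarrow> real) \<Rightarrow> (nat \<Rightarrow> real) \<Rightarrow> (nat \<Rightarrow> real) \<Rightarrow> nat \<Rightarrow> real" where
  "kn x y p j = (if even j then x (j div 2 + 1) else x (j div 2 + 1) + LL1 x y p (j div 2 + 1))"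
definition Yj :: "(nat \<Rightarrow> real) \<Rightarrow> (nat \<Rightarrow> real) \<Rightarrow> (nat \<Rightarrow> real) \<Rightarrow> nat \<Rightarrow> real" where
  "Yj x y p j = (if even j then y (j div 2 + 1) else
     y (j div 2 + 1) + p (j div 2 + 1) * LL1 x y p (j div 2 + 1) + ss1 x y p (j div 2 + 1) / 2 * (LL1 x y p (j div 2 + 1))^2)"
definition Pj :: "(nat \<Rightarrow> real) \<Rightarrow> (nat \<Rightarrow> real) \<Rightarrow> (nat \<Rightarrow> real) \<Rightarrow> nat \<Rightarrow> real" where
  "Pj x y p j = (if even j then p (j div 2 + 1) else p (j div 2 + 1) + al x y p (j div 2 + 1))"
definition Sj :: "(nat \<Rightarrow> real) \<Rightarrow> (nat \<Rightarrow> real) \<Rightarrow> (nat \<Rightarrow> real) \<Rightarrow> nat \<Rightarrow> real" where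
  "Sj x y p j = (if even j then ss1 x y p (j div 2 + 1) else ss2 x y p (j div 2 + 1))"

lemma knot_facts:
  fixes C :: real and x y p :: "nat \<Rightarrow> real"
  assumes C: "C \<ge> 1" and i: "i = j div 2 + 1"
    and H1: "x i < x (Suc i)" and H2: "p i < p (Suc i)"
    and H3: "(x (Suc i) - x i) / C \<le> p (Suc i) - p i"
    and H4: "p (Suc i) - p i \<le> C * (x (Suc i) - x i)"
    and H5: "(p (Suc i) - (y (Suc i) - y i) / (x (Suc i) - x i)) / C
          \<le> (y (Suc i) - y i) / (x (Suc i) - x i) - p i"
    and H6: "(y (Suc i) - y i) / (x (Suc i) - x i) - p i
          \<le> C * (p (Suc i) - (y (Suc i) - y i) / (x (Suc i) - x i))"
  shows "kn x y p j < kn x y p (Suc j)"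
    "pF (kn x y p j) (Yj x y p j) (Pj x y p j) (Sj x y p j) (kn x y p (Suc j)) = Yj x y p (Suc j)"
    "pF' (kn x y p j) (Pj x y p j) (Sj x y p j) (kn x y p (Suc j)) = Pj x y p (Suc j)"
    "1/C^2 \<le> Sj x y p j" "Sj x y p j \<le> C^2"
proof -
  define h where "h = hh x i"
  define A where "A = al x y p i"
  define B where "B = be x y p i"
  have h: "h > 0" using H1 unfolding h_def hh_def by simp
  have AB: "A + B = p (Suc i) - p i" unfolding A_def B_def al_def be_def by simp
  have b1: "B / C \<le> A" "A \<le> C * B" using H5 H6 unfolding A_def B_def al_def be_def qq_def hh_def by simp_all
  have b2: "h / C \<le> A + B" "A + B \<le> C * h" using H3 H4 AB unfolding h_def hh_def by simp_all
  have B: "B > 0"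
  proof (rule ccontr)
    assume "\<not> B > 0"
    then have "C * B \<le> 0" using C by (simp add: mult_nonneg_nonpos)
    then show False using b1 AB H2 \<open>\<not> B > 0\<close> by linarith
  qed
  have A: "A > 0"
  proof -
    have "B / C > 0" using B C by simp
    then show ?thesis using b1 by linarith
  qed
  note alg = interval_alg[OF h A B]
  note sb = slope_bounds[OF C h A B b1 b2]
  have L1: "LL1 x y p i = h*B/(A+B)" unfolding LL1_def h_def A_def B_def ..
  have s1: "ss1 x y p i = A*(A+B)/(h*B)" unfolding ss1_def h_def A_def B_def ..
  have s2: "ss2 x y p i = B*(A+B)/(h*A)" unfolding ss2_def h_def A_def B_def ..
  have xS: "x (Suc i) = x i + h" unfolding h_def hh_def by simp
  have yS: "y (Suc i) = y i + h * (p i + A)" unfolding A_def al_def qq_def h_def using h unfolding h_def by simp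
  have pS: "p (Suc i) = p i + A + B" using AB by simp
  show "kn x y p j < kn x y p (Suc j)"
  proof (cases "even j")
    case True then show ?thesis unfolding kn_def using alg(1) i L1 by simp
  next
    case False
    then have "kn x y p (Suc j) = x (Suc i)" unfolding kn_def using i by simp
    moreover have "kn x y p j = x i + h*B/(A+B)" unfolding kn_def using i L1 False by simp
    ultimately show ?thesis using alg(2,3) xS by simp
  qed
  show "pF (kn x y p j) (Yj x y p j) (Pj x y p j) (Sj x y p j) (kn x y p (Suc j)) = Yj x y p (Suc j)"
  proof (cases "even j")
    case True then show ?thesis unfolding kn_def Yj_def Pj_def Sj_def pF_def using i by simp
  next
    case False
    then have k: "kn x y p (Suc j) - kn x y p j = h*A/(A+B)" unfolding kn_def using i L1 xS alg(3) by simp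
    have "Yj x y p (Suc j) = y (Suc i)" unfolding Yj_def using False i by simp
    also have "\<dots> = y i + p i * (h*B/(A+B)) + A*(A+B)/(h*B) / 2 * (h*B/(A+B))^2
      + (p i + A) * (h*A/(A+B)) + B*(A+B)/(h*A) / 2 * (h*A/(A+B))^2" using alg(6)[of "y i" "p i"] yS by simp
    finally show ?thesis unfolding pF_def k unfolding Yj_def Pj_def Sj_def using False i L1 s1 s2
      by (simp add: A_def)
  qed
  show "pF' (kn x y p j) (Pj x y p j) (Sj x y p j) (kn x y p (Suc j)) = Pj x y p (Suc j)"
  proof (cases "even j")
    case True
    then have k: "kn x y p (Suc j) - kn x y p j = h*B/(A+B)" unfolding kn_def using i L1 by simp
    show ?thesis unfolding pF'_def k unfolding Pj_def Sj_def using True i s1 alg(4) by (simp add: A_def)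
  next
    case False
    then have k: "kn x y p (Suc j) - kn x y p j = h*A/(A+B)" unfolding kn_def using i L1 xS alg(3) by simp
    show ?thesis unfolding pF'_def k unfolding Pj_def Sj_def using False i s2 alg(5) pS by (simp add: A_def)
  qed
  show "1/C^2 \<le> Sj x y p j" "Sj x y p j \<le> C^2"
    unfolding Sj_def using sb i s1 s2 by auto
qed



lemma gl_nodes:
  assumes inc: "\<forall>j\<le>M. a j < a (Suc j)"
    and st: "\<forall>j\<le>M. \<phi> j (a j) = V j" and en: "\<forall>j\<le>M. \<phi> j (a (Suc j)) = V (Suc j)"
    and J: "J \<le> Suc M"
  shows "gl \<phi> a M (a J) = V J"
proof (cases "J \<le> M")
  case True
  have m: "\<forall>j<M. \<phi> j (a (Suc j)) = \<phi> (Suc j) (a (Suc j))" using st en by auto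
  have "gl \<phi> a M (a J) = \<phi> J (a J)" by (rule gl_val[OF inc m True]) (use inc True in auto)
  then show ?thesis using st True by simp
next
  case False
  then have "J = Suc M" using J by simp
  then show ?thesis using gl_end[OF inc, of \<phi>] en by simp
qed

lemma gl_match:
  assumes st: "\<forall>j\<le>M. \<phi> j (a j) = V j" and en: "\<forall>j\<le>M. \<phi> j (a (Suc j)) = V (Suc j)"
  shows "\<forall>j<M. \<phi> j (a (Suc j)) = \<phi> (Suc j) (a (Suc j))"
  using st en by auto

theorem theorem5:
  fixes C :: real
  assumes "C \<ge> 1"
  shows "\<exists>K\<ge>1. \<forall>(n::nat) (x::nat \<Rightarrow> real) (y::nat \<Rightarrow> real) (p::nat \<Rightarrow> real).
    (2 \<le> n \<and>
     (\<forall>i\<in>{1..<n}. x i < x (Suc i) \<and> y i < y (Suc i) \<and> p i < p (Suc i)) \<and>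
     (\<forall>i\<in>{1..<n}.
        (x (Suc i) - x i) / C \<le> p (Suc i) - p i \<and>
        p (Suc i) - p i \<le> C * (x (Suc i) - x i) \<and>
        (p (Suc i) - (y (Suc i) - y i) / (x (Suc i) - x i)) / C
          \<le> (y (Suc i) - y i) / (x (Suc i) - x i) - p i \<and>
        (y (Suc i) - y i) / (x (Suc i) - x i) - p i
          \<le> C * (p (Suc i) - (y (Suc i) - y i) / (x (Suc i) - x i))))
    \<longrightarrow>
    (\<exists>(f::real \<Rightarrow> real) (f'::real \<Rightarrow> real) (m::nat) (a::nat \<Rightarrow> real) (s::nat \<Rightarrow> real).
       \<comment> \<open>(a) f strictly convex, C^1 on [x_1, x_n], interpolating\<close>
       strict_convex_on {x 1..x n} f \<and>
       continuous_on {x 1..x n} f' \<and>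
       (\<forall>t\<in>{x 1..x n}. (f has_real_derivative f' t) (at t within {x 1..x n})) \<and>
       (\<forall>i\<in>{1..n}. f (x i) = y i \<and> f' (x i) = p i) \<and>
       \<comment> \<open>f' piecewise linear with pieces [a j, a (j+1)] of slope s j in [1/K, K]\<close>
       1 \<le> m \<and> a 0 = x 1 \<and> a m = x n \<and>
       (\<forall>j<m. a j < a (Suc j) \<and>
          (\<forall>t\<in>{a j..a (Suc j)}. f' t = f' (a j) + s j * (t - a j)) \<and>
          1 / K \<le> s j \<and> s j \<le> K) \<and>
       \<comment> \<open>(b) a convex C^2 modification g with D = pi/4 * inf of slopes\<close>
       (\<exists>(g::real \<Rightarrow> real) (g'::real \<Rightarrow> real) (g''::real \<Rightarrow> real).
          convex_on {x 1..x n} g \<and>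
          continuous_on {x 1..x n} g'' \<and>
          (\<forall>t\<in>{x 1..x n}. (g has_real_derivative g' t) (at t within {x 1..x n})) \<and>
          (\<forall>t\<in>{x 1..x n}. (g' has_real_derivative g'' t) (at t within {x 1..x n})) \<and>
          (\<forall>i\<in>{1..n}. g (x i) = y i \<and> g' (x i) = p i \<and>
             g'' (x i) = pi / 4 * (INF j\<in>{..<m}. s j)) \<and>
          (\<forall>t\<in>{x 1<..<x n}. 1 / K \<le> g'' t \<and> g'' t \<le> K)))"

proof -
  define K where "K = 4 * C^2"
  have C0: "C > 0" using assms by simp
  have K1: "1 \<le> K" unfolding K_def using assms one_le_power[of C 2] by linarith
  have KC: "1 / K \<le> 1 / C^2" "C^2 \<le> K" "2 * C^2 \<le> K" unfolding K_def using C0 by (auto simp: field_simps)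
  show ?thesis
    apply (rule exI[of _ K])
    apply (rule conjI[OF K1])
    apply (intro allI impI)
    subgoal premises H for n x y p
    proof -
      have n2: "2 \<le> n" using H by simp
      have hyp: "x i < x (Suc i) \<and> p i < p (Suc i) \<and>
        (x (Suc i) - x i) / C \<le> p (Suc i) - p i \<and>
        p (Suc i) - p i \<le> C * (x (Suc i) - x i) \<and>
        (p (Suc i) - (y (Suc i) - y i) / (x (Suc i) - x i)) / C
          \<le> (y (Suc i) - y i) / (x (Suc i) - x i) - p i \<and>
        (y (Suc i) - y i) / (x (Suc i) - x i) - p i
          \<le> C * (p (Suc i) - (y (Suc i) - y i) / (x (Suc i) - x i))" if "i \<in> {1..<n}" for i
        using H that by auto
      define M where "M = 2 * n - 3"
      have jv: "j div 2 + 1 \<in> {1..<n}" if "j \<le> M" for j using that n2 unfolding M_def by auto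
      have kf: "kn x y p j < kn x y p (Suc j)"
        "pF (kn x y p j) (Yj x y p j) (Pj x y p j) (Sj x y p j) (kn x y p (Suc j)) = Yj x y p (Suc j)"
        "pF' (kn x y p j) (Pj x y p j) (Sj x y p j) (kn x y p (Suc j)) = Pj x y p (Suc j)"
        "1/C^2 \<le> Sj x y p j" "Sj x y p j \<le> C^2" if "j \<le> M" for j
      proof -
        note h = hyp[OF jv[OF that]]
        note k = knot_facts[where j=j and x=x and y=y and p=p, OF assms refl h[THEN conjunct1]
          h[THEN conjunct2, THEN conjunct1] h[THEN conjunct2, THEN conjunct2, THEN conjunct1]
          h[THEN conjunct2, THEN conjunct2, THEN conjunct2, THEN conjunct1]
          h[THEN conjunct2, THEN conjunct2, THEN conjunct2, THEN conjunct2, THEN conjunct1]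
          h[THEN conjunct2, THEN conjunct2, THEN conjunct2, THEN conjunct2, THEN conjunct2]]
        show "kn x y p j < kn x y p (Suc j)"
          "pF (kn x y p j) (Yj x y p j) (Pj x y p j) (Sj x y p j) (kn x y p (Suc j)) = Yj x y p (Suc j)"
          "pF' (kn x y p j) (Pj x y p j) (Sj x y p j) (kn x y p (Suc j)) = Pj x y p (Suc j)"
          "1/C^2 \<le> Sj x y p j" "Sj x y p j \<le> C^2" by (fact k(1), fact k(2), fact k(3), fact k(4), fact k(5))
      qed
      define a where "a = kn x y p"
      define s where "s = Sj x y p"
      have inc: "\<forall>j\<le>M. a j < a (Suc j)" using kf(1) unfolding a_def by auto
      have SM: "Suc M = 2 * (n - 1)" unfolding M_def using n2 by simp
      have a0: "a 0 = x 1" unfolding a_def kn_def by simp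
      have aM: "a (Suc M) = x n" unfolding a_def kn_def SM using n2 by simp
      have node: "2 * (i - 1) \<le> Suc M \<and> a (2 * (i - 1)) = x i \<and> Yj x y p (2 * (i - 1)) = y i
          \<and> Pj x y p (2 * (i - 1)) = p i" if "i \<in> {1..n}" for i
        using that unfolding SM a_def kn_def Yj_def Pj_def by auto
      have dom: "{a 0..a (Suc M)} = {x 1..x n}" using a0 aM by simp
      have spos: "s j > 0" if "j \<le> M" for j
        using kf(4)[OF that] C0 unfolding s_def by (smt (verit) divide_pos_pos zero_less_power)
      define \<phi>F where "\<phi>F = (\<lambda>j. pF (a j) (Yj x y p j) (Pj x y p j) (s j))"
      define \<phi>F' where "\<phi>F' = (\<lambda>j. pF' (a j) (Pj x y p j) (s j))"
      have stF: "\<forall>j\<le>M. \<phi>F j (a j) = Yj x y p j" unfolding \<phi>F_def by (simp add: pF_def)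
      have enF: "\<forall>j\<le>M. \<phi>F j (a (Suc j)) = Yj x y p (Suc j)" using kf(2) unfolding \<phi>F_def a_def s_def by simp
      have stF': "\<forall>j\<le>M. \<phi>F' j (a j) = Pj x y p j" unfolding \<phi>F'_def by (simp add: pF'_def)
      have enF': "\<forall>j\<le>M. \<phi>F' j (a (Suc j)) = Pj x y p (Suc j)" using kf(3) unfolding \<phi>F'_def a_def s_def by simp
      define f where "f = gl \<phi>F a M"
      define f' where "f' = gl \<phi>F' a M"
      have df: "\<forall>t\<in>{x 1..x n}. (f has_real_derivative f' t) (at t within {x 1..x n})"
        unfolding f_def f'_def dom[symmetric]
        by (rule gl_deriv[OF inc gl_match[where \<phi>="\<phi>F" and V="Yj x y p", OF stF enF] gl_match[where \<phi>="\<phi>F'" and V="Pj x y p", OF stF' enF']]) (simp add: \<phi>F_def \<phi>F'_def pF_deriv)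
      have smf': "strict_mono_on {x 1..x n} f'"
        unfolding f'_def dom[symmetric]
        by (rule gl_smono[OF inc gl_match[where \<phi>="\<phi>F'" and V="Pj x y p", OF stF' enF']]) (simp add: \<phi>F'_def pF'_smono spos)
      have cf': "continuous_on {x 1..x n} f'"
        unfolding f'_def dom[symmetric]
        by (rule gl_cont[OF inc gl_match[where \<phi>="\<phi>F'" and V="Pj x y p", OF stF' enF']]) (simp add: \<phi>F'_def pF'_cont)
      have scf: "strict_convex_on {x 1..x n} f" by (rule strict_convex_from_deriv[OF df smf'])
      have interpF: "\<forall>i\<in>{1..n}. f (x i) = y i \<and> f' (x i) = p i"
      proof
        fix i assume i: "i \<in> {1..n}"
        show "f (x i) = y i \<and> f' (x i) = p i"
          using gl_nodes[where \<phi>="\<phi>F" and V="Yj x y p", OF inc stF enF, of "2 * (i - 1)"] gl_nodes[where \<phi>="\<phi>F'" and V="Pj x y p", OF inc stF' enF', of "2 * (i - 1)"] node[OF i]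
          unfolding f_def f'_def by simp
      qed
      have linF: "\<forall>j<Suc M. a j < a (Suc j) \<and>
          (\<forall>t\<in>{a j..a (Suc j)}. f' t = f' (a j) + s j * (t - a j)) \<and> 1 / K \<le> s j \<and> s j \<le> K"
      proof (intro allI impI conjI ballI)
        fix j assume j: "j < Suc M"
        then have jM: "j \<le> M" by simp
        show "a j < a (Suc j)" using inc jM by simp
        have v: "f' t = \<phi>F' j t" if "t \<in> {a j..a (Suc j)}" for t
          unfolding f'_def by (rule gl_val[OF inc gl_match[where \<phi>="\<phi>F'" and V="Pj x y p", OF stF' enF'] jM that])
        fix t assume t: "t \<in> {a j..a (Suc j)}"
        have "a j \<in> {a j..a (Suc j)}" using inc jM by (simp add: less_imp_le)
        then show "f' t = f' (a j) + s j * (t - a j)" using v[OF t] v[of "a j"] unfolding \<phi>F'_def pF'_def by simp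
      next
        fix j assume j: "j < Suc M"
        then have jM: "j \<le> M" by simp
        show "1 / K \<le> s j" "s j \<le> K" using kf(4,5)[OF jM] KC unfolding s_def by linarith+
      qed
      define D where "D = pi / 4 * (INF j\<in>{..<Suc M}. s j)"
      have INFl: "1 / C^2 \<le> (INF j\<in>{..<Suc M}. s j)"
        by (rule cINF_greatest) (use kf(4) in \<open>auto simp: s_def\<close>)
      have INFu: "(INF j\<in>{..<Suc M}. s j) \<le> s j" if "j \<le> M" for j
        by (rule cINF_lower) (use that in auto)
      have Dlo: "1 / K \<le> D"
      proof -
        have "1 / K = 1 / 4 * (1 / C^2)" unfolding K_def by simp
        also have "\<dots> \<le> pi / 4 * (1 / C^2)" using pi_gt3 by (intro mult_right_mono) auto
        also have "\<dots> \<le> pi / 4 * (INF j\<in>{..<Suc M}. s j)" using INFl by (intro mult_left_mono) (auto simp: pi_ge_zero)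
        finally show ?thesis unfolding D_def .
      qed
      have "0 < 1 / K" using K1 by simp
      then have Dpos: "0 < D" using Dlo by linarith
      have Dup: "D \<le> s j" if "j \<le> M" for j
      proof -
        have "D \<le> pi / 4 * s j" unfolding D_def using INFu[OF that] by (intro mult_left_mono) (auto simp: pi_ge_zero)
        also have "\<dots> \<le> s j" using spos[OF that] pi_less_4 by (simp add: mult_le_cancel_right1)
        finally show ?thesis .
      qed
      define \<phi>G where "\<phi>G = (\<lambda>j. pG (a j) (a (Suc j)) (Yj x y p j) (Pj x y p j) (s j) D)"
      define \<phi>G' where "\<phi>G' = (\<lambda>j. pG' (a j) (a (Suc j)) (Pj x y p j) (s j) D)"
      define \<phi>G'' where "\<phi>G'' = (\<lambda>j. pG'' (a j) (a (Suc j)) (s j) D)"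
      have stG: "\<forall>j\<le>M. \<phi>G j (a j) = Yj x y p j" using inc unfolding \<phi>G_def by (simp add: pG_ends)
      have enG: "\<forall>j\<le>M. \<phi>G j (a (Suc j)) = Yj x y p (Suc j)" using inc enF unfolding \<phi>G_def \<phi>F_def by (simp add: pG_ends)
      have stG': "\<forall>j\<le>M. \<phi>G' j (a j) = Pj x y p j" using inc unfolding \<phi>G'_def by (simp add: pG_ends)
      have enG': "\<forall>j\<le>M. \<phi>G' j (a (Suc j)) = Pj x y p (Suc j)" using inc enF' unfolding \<phi>G'_def \<phi>F'_def by (simp add: pG_ends)
      have stG'': "\<forall>j\<le>M. \<phi>G'' j (a j) = (\<lambda>_. D) j" using inc unfolding \<phi>G''_def by (simp add: pG_ends)
      have enG'': "\<forall>j\<le>M. \<phi>G'' j (a (Suc j)) = (\<lambda>_. D) (Suc j)" using inc unfolding \<phi>G''_def by (simp add: pG_ends)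
      define g where "g = gl \<phi>G a M"
      define g' where "g' = gl \<phi>G' a M"
      define g'' where "g'' = gl \<phi>G'' a M"
      have dg: "\<forall>t\<in>{x 1..x n}. (g has_real_derivative g' t) (at t within {x 1..x n})"
        unfolding g_def g'_def dom[symmetric]
        by (rule gl_deriv[OF inc gl_match[where \<phi>="\<phi>G" and V="Yj x y p", OF stG enG] gl_match[where \<phi>="\<phi>G'" and V="Pj x y p", OF stG' enG']]) (use inc in \<open>simp add: \<phi>G_def \<phi>G'_def pG_deriv\<close>)
      have dg': "\<forall>t\<in>{x 1..x n}. (g' has_real_derivative g'' t) (at t within {x 1..x n})"
        unfolding g'_def g''_def dom[symmetric]
        by (rule gl_deriv[OF inc gl_match[where \<phi>="\<phi>G'" and V="Pj x y p", OF stG' enG'] gl_match[where \<phi>="\<phi>G''" and V="(\<lambda>_. D)", OF stG'' enG'']]) (use inc in \<open>simp add: \<phi>G'_def \<phi>G''_def pG'_deriv\<close>)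
      have cg'': "continuous_on {x 1..x n} g''"
        unfolding g''_def dom[symmetric]
        by (rule gl_cont[OF inc gl_match[where \<phi>="\<phi>G''" and V="(\<lambda>_. D)", OF stG'' enG'']]) (simp add: \<phi>G''_def pG''_cont)
      have gb: "D \<le> g'' t \<and> g'' t \<le> K" if t: "t \<in> {x 1..x n}" for t
      proof -
        obtain j where j: "j \<le> M" "t \<in> {a j..a (Suc j)}" using gl_cover[OF inc, of t] t dom by auto
        have "g'' t = \<phi>G'' j t" unfolding g''_def by (rule gl_val[OF inc gl_match[where \<phi>="\<phi>G''" and V="(\<lambda>_. D)", OF stG'' enG''] j])
        moreover have "D \<le> \<phi>G'' j t" "\<phi>G'' j t \<le> 2 * s j"
          unfolding \<phi>G''_def using pG''_bounds[OF Dup[OF j(1)]] Dpos by auto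
        moreover have "2 * s j \<le> K" using kf(5)[OF j(1)] KC unfolding s_def by linarith
        ultimately show ?thesis by linarith
      qed
      have smg': "strict_mono_on {x 1..x n} g'"
        by (rule strict_mono_from_deriv[OF dg']) (use gb Dpos in force)
      have cvg: "convex_on {x 1..x n} g"
        by (rule strict_convex_imp_convex[OF strict_convex_from_deriv[OF dg smg']])
      have interpG: "\<forall>i\<in>{1..n}. g (x i) = y i \<and> g' (x i) = p i \<and> g'' (x i) = D"
      proof
        fix i assume i: "i \<in> {1..n}"
        show "g (x i) = y i \<and> g' (x i) = p i \<and> g'' (x i) = D"
          using gl_nodes[where \<phi>="\<phi>G" and V="Yj x y p", OF inc stG enG, of "2 * (i - 1)"] gl_nodes[where \<phi>="\<phi>G'" and V="Pj x y p", OF inc stG' enG', of "2 * (i - 1)"]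
            gl_nodes[where \<phi>="\<phi>G''" and V="(\<lambda>_. D)", OF inc stG'' enG'', of "2 * (i - 1)"] node[OF i]
          unfolding g_def g'_def g''_def by simp
      qed
      have gint: "\<forall>t\<in>{x 1<..<x n}. 1 / K \<le> g'' t \<and> g'' t \<le> K"
      proof
        fix t assume "t \<in> {x 1<..<x n}"
        then have "t \<in> {x 1..x n}" by simp
        then have "D \<le> g'' t \<and> g'' t \<le> K" by (rule gb)
        then show "1 / K \<le> g'' t \<and> g'' t \<le> K" using Dlo by linarith
      qed
      have partB: "\<exists>(g::real \<Rightarrow> real) (g'::real \<Rightarrow> real) (g''::real \<Rightarrow> real).
          convex_on {x 1..x n} g \<and>
          continuous_on {x 1..x n} g'' \<and>
          (\<forall>t\<in>{x 1..x n}. (g has_real_derivative g' t) (at t within {x 1..x n})) \<and>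
          (\<forall>t\<in>{x 1..x n}. (g' has_real_derivative g'' t) (at t within {x 1..x n})) \<and>
          (\<forall>i\<in>{1..n}. g (x i) = y i \<and> g' (x i) = p i \<and>
             g'' (x i) = pi / 4 * (INF j\<in>{..<Suc M}. s j)) \<and>
          (\<forall>t\<in>{x 1<..<x n}. 1 / K \<le> g'' t \<and> g'' t \<le> K)"
        apply (rule exI[of _ g], rule exI[of _ g'], rule exI[of _ g''])
        unfolding D_def[symmetric]
        apply (intro conjI)
        apply (rule cvg) apply (rule cg'') apply (rule dg) apply (rule dg') apply (rule interpG) apply (rule gint)
        done
      show ?thesis
        apply (rule exI[of _ f], rule exI[of _ f'], rule exI[of _ "Suc M"], rule exI[of _ a], rule exI[of _ s])
        apply (intro conjI)
        apply (rule scf) apply (rule cf') apply (rule df) apply (rule interpF) apply simp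
        apply (rule a0) apply (rule aM) apply (rule linF) apply (rule partB)
        done
    qed
    done
qed

end
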